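(* Let $a\in\mathbb{N}$ and $b,d\in\mathbb{Z}$ with $b>d$, $\gcd(a,b-d)=1$ and $a\mid bd$. Then there exist $A,B\in\mathbb{N}$ with $B\ge 2$ and $A=B(B-1)$ such that $R_{a,b,a,d}\supseteq R_{A,B,A,B-1}$; in particular $\omega(G_{a,b,a,d})\ge\omega(G_{A,B,A,B-1})$. Moreover, there exist $C,D\in\mathbb{N}$ such that for every integer $m\ge 1$, setting $n=Cm+D$, $$\frac{an+b}{an+d}=\frac{Am+B}{Am+(B-1)}.$$
   Context: $\mathbb{N}=\{1,2,\dots\}$. For $a,c\in\mathbb{N}$, $b,d\in\mathbb{Z}$, $R_{a,b,c,d} := \left\{ \frac{an+b}{cn+d} : n \in \mathbb{N} \right\} \cap (\mathbb{Q}_{>0}\setminus\{1\})$; $G_{a,b,c,d}$ is the graph with vertex set $\mathbb{N}$ and edge set $\{\{m,n\}: m/n\in R_{a,b,c,d}\}$. $\omega$ denotes clique number. *)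

theory Defs
  imports Main "HOL-Library.Extended_Nat"
begin

text \<open>R_{a,b,c,d} = { (an+b)/(cn+d) : n \<in> N, n \<ge> 1 } intersected with positive rationals other than 1.
  (If cn+d = 0 the quotient is 0 in HOL, which is excluded by positivity.)\<close>
definition Rset :: "nat \<Rightarrow> int \<Rightarrow> nat \<Rightarrow> int \<Rightarrow> rat set" where
  "Rset a b c d =
     {q. \<exists>n::nat. n \<ge> 1 \<and> q = (of_nat a * of_nat n + of_int b) / (of_nat c * of_nat n + of_int d)}
     \<inter> {q. q > 0 \<and> q \<noteq> 1}"

definition Gadj :: "nat \<Rightarrow> int \<Rightarrow> nat \<Rightarrow> int \<Rightarrow> nat \<Rightarrow> nat \<Rightarrow> bool" where
  "Gadj a b c d m n \<longleftrightarrow> m \<ge> 1 \<and> n \<ge> 1 \<and>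
     (of_nat m / of_nat n \<in> Rset a b c d \<or> of_nat n / of_nat m \<in> Rset a b c d)"

definition is_clique :: "nat \<Rightarrow> int \<Rightarrow> nat \<Rightarrow> int \<Rightarrow> nat set \<Rightarrow> bool" where
  "is_clique a b c d K \<longleftrightarrow> K \<subseteq> {1..} \<and> (\<forall>m\<in>K. \<forall>n\<in>K. m \<noteq> n \<longrightarrow> Gadj a b c d m n)"

definition clique_number :: "nat \<Rightarrow> int \<Rightarrow> nat \<Rightarrow> int \<Rightarrow> enat" where
  "clique_number a b c d = (SUP K \<in> {K. finite K \<and> is_clique a b c d K}. enat (card K))"

end

theory Submission
  imports Defs
begin

lemma ratio_eq:
  fixes a A B C D m :: nat and b d k :: int
  assumes k: "k \<ge> 1" and bd: "b = d + k" and B: "B \<ge> 2"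
    and id: "int a * int (C*m+D) + d = k * (int A * int m + int B - 1)"
  shows "(of_nat a * of_nat (C*m+D) + of_int b) / (of_nat a * of_nat (C*m+D) + of_int d)
         = (of_nat A * of_nat m + of_nat B) / (of_nat A * of_nat m + (of_nat B - 1) :: rat)"
proof -
  have id1: "(of_nat a * of_nat (C*m+D) + of_int d :: rat) = of_int k * (of_nat A * of_nat m + (of_nat B - 1))"
    using arg_cong[OF id, of "of_int :: int \<Rightarrow> rat"] by simp
  have id2: "(of_nat a * of_nat (C*m+D) + of_int b :: rat) = of_int k * (of_nat A * of_nat m + of_nat B)"
    using id1 bd by (simp add: algebra_simps)
  have "(of_int k :: rat) \<noteq> 0" using k by simp
  moreover have "(of_nat A * of_nat m + (of_nat B - 1) :: rat) \<noteq> 0"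
  proof -
    have "(of_nat B :: rat) \<ge> 2" using B by (metis of_nat_le_iff of_nat_numeral)
    moreover have "(of_nat A * of_nat m :: rat) \<ge> 0" by simp
    ultimately show ?thesis by linarith
  qed
  ultimately show ?thesis unfolding id1 id2 by simp
qed

theorem lemma3p3:
  fixes a :: nat and b d :: int
  assumes "a \<ge> 1" and "b > d" and "gcd (int a) (b - d) = 1" and "int a dvd b * d"
  shows "\<exists>A B :: nat. B \<ge> 2 \<and> A = B * (B - 1) \<and>
           Rset A (int B) A (int B - 1) \<subseteq> Rset a b a d \<and>
           clique_number a b a d \<ge> clique_number A (int B) A (int B - 1) \<and>
           (\<exists>C D :: nat. C \<ge> 1 \<and> D \<ge> 1 \<and>
              (\<forall>m::nat. m \<ge> 1 \<longrightarrow>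
                 (let n = C * m + D in
                   (of_nat a * of_nat n + of_int b) / (of_nat a * of_nat n + of_int d)
                   = (of_nat A * of_nat m + of_nat B) / (of_nat A * of_nat m + (of_nat B - 1) :: rat))))"
proof -
  define k where "k = b - d"
  have k1: "k \<ge> 1" using assms(2) k_def by simp
  have bdk: "b = d + k" using k_def by simp
  obtain u v where uv: "u * int a + v * k = 1" using bezout_int[of "int a" k] assms(3) k_def by auto
  define x0 where "x0 = v * d"
  define L where "L = \<bar>d*u\<bar> + \<bar>x0\<bar> + 1"
  define x where "x = x0 + L * int a"
  have a1: "int a \<ge> 1" using assms(1) by simp
  have L1: "L \<ge> 1" unfolding L_def by simp
  have "L * int a \<ge> L" using a1 L1 by (simp add: mult_le_cancel_left1)
  hence x1: "x \<ge> 1" unfolding x_def L_def by linarith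
  have "k * L \<ge> L" using k1 L1 by (simp add: mult_le_cancel_right1)
  hence D1: "k*L - d*u \<ge> 1" unfolding L_def by linarith
  have kx: "k * x - d = int a * (k*L - d*u)"
  proof -
    have "k * x0 = d - d*u*int a" using uv unfolding x0_def
      by (metis (no_types, lifting) add_diff_cancel_left' mult.assoc mult.commute mult.right_neutral right_diff_distrib)
    thus ?thesis unfolding x_def by (simp add: algebra_simps)
  qed
  have x0eq: "x0 + 1 = v*b + u*int a" using uv bdk unfolding x0_def by (simp add: algebra_simps)
  have dvx0: "int a dvd x0 * (x0 + 1)"
  proof -
    have "x0 * (x0 + 1) = v*v*(b*d) + int a * (v*d*u)" unfolding x0eq unfolding x0_def
      by (simp add: algebra_simps)
    thus ?thesis using assms(4) by simp
  qed
  have dvx: "int a dvd x * (x + 1)"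
  proof -
    have "x * (x+1) = x0 * (x0 + 1) + int a * (L*(2*x0+1) + L*L*int a)" unfolding x_def
      by (simp add: algebra_simps)
    thus ?thesis using dvx0 by simp
  qed
  define B where "B = nat (x + 1)"
  define A where "A = B * (B - 1)"
  have B2: "B \<ge> 2" using x1 B_def by simp
  have intB: "int B = x + 1" using x1 B_def by simp
  have intA: "int A = x * (x + 1)" unfolding A_def using intB B2 by (simp add: of_nat_diff)
  obtain c where c: "x * (x+1) = int a * c" using dvx by blast
  have Apos: "int A \<ge> 2"
  proof -
    have "x * (x+1) \<ge> 1 * 2" using x1 by (intro mult_mono) auto
    thus ?thesis using intA by simp
  qed
  have c1: "c \<ge> 1"
  proof (rule ccontr)
    assume "\<not> c \<ge> 1" hence "c \<le> 0" by simp
    hence "int a * c \<le> 0" using a1 by (simp add: mult_nonneg_nonpos)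
    thus False using c intA Apos by simp
  qed
  define C where "C = nat (k * c)"
  define D where "D = nat (k*L - d*u)"
  have kc: "k * c \<ge> 1" using k1 c1 by (metis mult_le_cancel_left1 order.trans zero_less_one_class.zero_le_one
        linorder_not_le less_le_trans)
  have C1: "C \<ge> 1" using kc C_def by simp
  have D1': "D \<ge> 1" using D1 D_def by simp
  have intC: "int C = k * c" using kc C_def by simp
  have intD: "int D = k*L - d*u" using D1 D_def by simp
  have key: "\<And>m. int a * int (C*m+D) + d = k * (int A * int m + int B - 1)"
  proof -
    fix m
    have "int a * int (C*m+D) + d = int a * (k*c) * int m + int a * (k*L - d*u) + d"
      by (simp add: intC intD algebra_simps)
    also have "\<dots> = k * (int a * c) * int m + (k*x - d) + d" using kx by (simp add: algebra_simps)
    also have "\<dots> = k * (int A * int m + int B - 1)" using c intA intB by (simp add: algebra_simps)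
    finally show "int a * int (C*m+D) + d = k * (int A * int m + int B - 1)" .
  qed
  have req: "\<And>m. (of_nat a * of_nat (C*m+D) + of_int b) / (of_nat a * of_nat (C*m+D) + of_int d)
         = (of_nat A * of_nat m + of_nat B) / (of_nat A * of_nat m + (of_nat B - 1) :: rat)"
    using ratio_eq[OF k1 bdk B2 key] by blast
  have sub: "Rset A (int B) A (int B - 1) \<subseteq> Rset a b a d"
  proof
    fix q assume "q \<in> Rset A (int B) A (int B - 1)"
    then obtain m :: nat where m: "m \<ge> 1" "q = (of_nat A * of_nat m + of_int (int B)) / (of_nat A * of_nat m + of_int (int B - 1))"
      and q: "q > 0" "q \<noteq> 1" unfolding Rset_def by auto
    have "q = (of_nat a * of_nat (C*m+D) + of_int b) / (of_nat a * of_nat (C*m+D) + of_int d)"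
      using m(2) req[of m] by simp
    moreover have "C*m+D \<ge> 1" using D1' by simp
    ultimately show "q \<in> Rset a b a d" using q unfolding Rset_def by blast
  qed
  have cl: "clique_number a b a d \<ge> clique_number A (int B) A (int B - 1)"
    unfolding clique_number_def
  proof (rule SUP_subset_mono)
    show "{K. finite K \<and> is_clique A (int B) A (int B - 1) K} \<subseteq> {K. finite K \<and> is_clique a b a d K}"
      using sub unfolding is_clique_def Gadj_def by blast
  qed simp
  show ?thesis
    apply (rule exI[of _ A], rule exI[of _ B])
    using B2 A_def sub cl C1 D1' req by (auto simp: Let_def)
qed

end
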